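(* Let $d\in\{2,3\}$, let $L,M,N$ be positive integers, $K:=dM+LN$. Let $\mathbf{A}\in\mathbb{R}^{dM\times dM}$, $\mathbf{C}\in\mathbb{R}^{LN\times LN}$ be symmetric positive definite, $\mathbf{B}\in\mathbb{R}^{dM\times LN}$ such that $\mathbf{E}=\begin{pmatrix}\mathbf{A}&\mathbf{B}\\ \mathbf{B}^\top&\mathbf{C}\end{pmatrix}$ is positive definite, $\mathbf{D}=\operatorname{diag}(D_1\mathbf{I}_{L\times L},\dots,D_N\mathbf{I}_{L\times L})$ with $D_i>0$, and $\mathbf{l}\in\mathbb{R}^{dM}$. Let $\mathbf{S}_i:\mathbb{R}^L\times\mathbb{R}^L\to\mathbb{R}^L$ ($i=1,\dots,N$) be semismooth, and define $\mathbf{F}(\mathbf{a},\mathbf{b},\mathbf{c})=(\mathbf{A}\mathbf{a}+\mathbf{B}\mathbf{b}+\mathbf{l},\ \mathbf{B}^\top\mathbf{a}+\mathbf{C}\mathbf{b}+\mathbf{D}\mathbf{c},\ \mathbf{S}_1(\mathbf{b}_1,\mathbf{c}_1),\dots,\mathbf{S}_N(\mathbf{b}_N,\mathbf{c}_N))$, where $\mathbf{b}_i=(b_{L(i-1)+1},\dots,b_{Li})^\top$ and $\mathbf{c}_i$ analogously. Let $(\mathbf{a}^*,\mathbf{b}^*,\mathbf{c}^* )$ be a solution of $\mathbf{F}(\mathbf{a}^*,\mathbf{b}^*,\mathbf{c}^* )=\mathbf{0}$, and let $\mathbf{H}\in\partial\mathbf{F}(\mathbf{a}^*,\mathbf{b}^*,\mathbf{c}^*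 )$, which has the form $\mathbf{H}=\begin{pmatrix}\mathbf{A}&\mathbf{B}&\mathbf{0}\\ \mathbf{B}^\top&\mathbf{C}&\mathbf{D}\\ \mathbf{0}&\mathbf{X}&\mathbf{Y}\end{pmatrix}$ with $\mathbf{X}=\operatorname{diag}(\mathbf{X}_1,\dots,\mathbf{X}_N)$, $\mathbf{Y}=\operatorname{diag}(\mathbf{Y}_1,\dots,\mathbf{Y}_N)$, $\mathbf{X}_i,\mathbf{Y}_i\in\mathbb{R}^{L\times L}$. Suppose the pair $(\mathbf{X}_i,\mathbf{Y}_i)$ is eigencomplementary for every $i\in\{1,\dots,N\}$. Then the Schur complement $\mathbf{S}_{\mathbf{H}}:=\mathbf{Y}-\mathbf{X}\mathbf{S}_{\mathbf{E}}^{-1}\mathbf{D}$ of $\mathbf{H}$ with respect to $\mathbf{E}$, where $\mathbf{S}_{\mathbf{E}}:=\mathbf{C}-\mathbf{B}^\top\mathbf{A}^{-1}\mathbf{B}$, is regular (invertible).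
   Context: Semismoothness is in the sense of Qi and Sun (1993). $\partial\mathbf{F}(\mathbf{x})$ denotes the Clarke subdifferential: the convex hull of all limits $\lim_n\nabla\mathbf{F}(\mathbf{x}_n)$ with $\mathbf{x}_n\to\mathbf{x}$ and $\mathbf{F}$ differentiable at each $\mathbf{x}_n$. A pair $(\mathbf{F},\mathbf{G})$ of real symmetric $L\times L$ matrices is called eigencomplementary if $\mathbf{F}$ is negative semi-definite, $\mathbf{G}$ is positive semi-definite, they have a common basis of eigenvectors of $\mathbb{R}^L$, and, if both are singular, additionally $\bigoplus_{\xi\in\sigma(\mathbf{F}),\,\xi<0}\operatorname{Eig}_{\mathbf{F}}(\xi)=\operatorname{Eig}_{\mathbf{G}}(0)$ ($\sigma$ = spectrum, $\operatorname{Eig}$ = eigenspace). *)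

theory Defs
  imports Complex_Main "Jordan_Normal_Form.Determinant"
begin

(* Vectors of R^n are JNF vectors in carrier_vec n, matrices R^{m x n} are in carrier_mat m n. *)

definition vnorm :: "real vec \<Rightarrow> real" where
  "vnorm v = sqrt (\<Sum>i<dim_vec v. (v $ i)^2)"

definition vec_block :: "real vec \<Rightarrow> nat \<Rightarrow> nat \<Rightarrow> real vec" where
  "vec_block v off len = vec len (\<lambda>j. v $ (off + j))"

definition has_jac :: "nat \<Rightarrow> nat \<Rightarrow> (real vec \<Rightarrow> real vec) \<Rightarrow> real mat \<Rightarrow> real vec \<Rightarrow> bool" where
  "has_jac n m F J x \<longleftrightarrow> J \<in> carrier_mat m n \<and>
     (\<forall>e>0. \<exists>\<delta>>0. \<forall>y\<in>carrier_vec n. vnorm (y - x) < \<delta> \<longrightarrow>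
        vnorm (F y - F x - J *\<^sub>v (y - x)) \<le> e * vnorm (y - x))"

definition jac_limits :: "nat \<Rightarrow> nat \<Rightarrow> (real vec \<Rightarrow> real vec) \<Rightarrow> real vec \<Rightarrow> real mat set" where
  "jac_limits n m F x = {J \<in> carrier_mat m n. \<exists>xs Js.
      (\<forall>k. xs k \<in> carrier_vec n \<and> has_jac n m F (Js k) (xs k)) \<and>
      (\<lambda>k. vnorm (xs k - x)) \<longlonglongrightarrow> 0 \<and>
      (\<forall>r<m. \<forall>c<n. (\<lambda>k. Js k $$ (r, c)) \<longlonglongrightarrow> J $$ (r, c))}"

definition clarke :: "nat \<Rightarrow> nat \<Rightarrow> (real vec \<Rightarrow> real vec) \<Rightarrow> real vec \<Rightarrow> real mat set" where
  "clarke n m F x = {H \<in> carrier_mat m n. \<exists>k (w :: nat \<Rightarrow> real) Ms.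
      (\<forall>j<k. w j \<ge> 0 \<and> Ms j \<in> jac_limits n m F x) \<and> (\<Sum>j<k. w j) = 1 \<and>
      (\<forall>r<m. \<forall>c<n. H $$ (r, c) = (\<Sum>j<k. w j * Ms j $$ (r, c)))}"

(* semismoothness at x in the sense of Qi and Sun (1993) *)
definition semismooth_at :: "nat \<Rightarrow> nat \<Rightarrow> (real vec \<Rightarrow> real vec) \<Rightarrow> real vec \<Rightarrow> bool" where
  "semismooth_at n m F x \<longleftrightarrow>
     (\<exists>r>0. \<exists>Lc. \<forall>y\<in>carrier_vec n. \<forall>z\<in>carrier_vec n.
        vnorm (y - x) < r \<longrightarrow> vnorm (z - x) < r \<longrightarrow> vnorm (F y - F z) \<le> Lc * vnorm (y - z)) \<and>
     (\<forall>h\<in>carrier_vec n. \<exists>lim\<in>carrier_vec m. \<forall>e>0. \<exists>\<delta>>0.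
        \<forall>h'\<in>carrier_vec n. \<forall>t V. vnorm (h' - h) < \<delta> \<and> 0 < t \<and> t < \<delta> \<and>
          V \<in> clarke n m F (x + t \<cdot>\<^sub>v h') \<longrightarrow> vnorm (V *\<^sub>v h' - lim) < e)"

definition semismooth :: "nat \<Rightarrow> nat \<Rightarrow> (real vec \<Rightarrow> real vec) \<Rightarrow> bool" where
  "semismooth n m F \<longleftrightarrow> (\<forall>x\<in>carrier_vec n. F x \<in> carrier_vec m) \<and>
     (\<forall>x\<in>carrier_vec n. semismooth_at n m F x)"

definition sym_pos_def :: "nat \<Rightarrow> real mat \<Rightarrow> bool" where
  "sym_pos_def n A \<longleftrightarrow> A \<in> carrier_mat n n \<and> transpose_mat A = A \<and>
     (\<forall>v\<in>carrier_vec n. v \<noteq> 0\<^sub>v n \<longrightarrow> v \<bullet> (A *\<^sub>v v) > 0)"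

definition neg_semidef :: "nat \<Rightarrow> real mat \<Rightarrow> bool" where
  "neg_semidef n A \<longleftrightarrow> A \<in> carrier_mat n n \<and> transpose_mat A = A \<and>
     (\<forall>v\<in>carrier_vec n. v \<bullet> (A *\<^sub>v v) \<le> 0)"

definition pos_semidef :: "nat \<Rightarrow> real mat \<Rightarrow> bool" where
  "pos_semidef n A \<longleftrightarrow> A \<in> carrier_mat n n \<and> transpose_mat A = A \<and>
     (\<forall>v\<in>carrier_vec n. v \<bullet> (A *\<^sub>v v) \<ge> 0)"

definition eig_space :: "nat \<Rightarrow> real mat \<Rightarrow> real \<Rightarrow> real vec set" where
  "eig_space n A \<xi> = {v \<in> carrier_vec n. A *\<^sub>v v = \<xi> \<cdot>\<^sub>v v}"

definition neg_eig_sum :: "nat \<Rightarrow> real mat \<Rightarrow> real vec set" where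
  "neg_eig_sum n A = {v \<in> carrier_vec n. \<exists>(k::nat) \<xi> w.
      (\<forall>j<k. \<xi> j < 0 \<and> w j \<in> eig_space n A (\<xi> j)) \<and>
      (\<forall>r<n. v $ r = (\<Sum>j<k. w j $ r))}"

definition eigencomplementary :: "nat \<Rightarrow> real mat \<Rightarrow> real mat \<Rightarrow> bool" where
  "eigencomplementary n F G \<longleftrightarrow> neg_semidef n F \<and> pos_semidef n G \<and>
     (\<exists>vs. (\<forall>j<n. vs j \<in> carrier_vec n \<and> (\<exists>\<kappa>. F *\<^sub>v vs j = \<kappa> \<cdot>\<^sub>v vs j) \<and>
                   (\<exists>\<mu>. G *\<^sub>v vs j = \<mu> \<cdot>\<^sub>v vs j)) \<and>
           invertible_mat (mat_of_cols n (map vs [0..<n]))) \<and>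
     (det F = 0 \<and> det G = 0 \<longrightarrow> neg_eig_sum n F = eig_space n G 0)"

definition blockdiag :: "nat \<Rightarrow> nat \<Rightarrow> (nat \<Rightarrow> real mat) \<Rightarrow> real mat" where
  "blockdiag L N Xs = mat (L * N) (L * N)
     (\<lambda>(r, c). if r div L = c div L then Xs (r div L) $$ (r mod L, c mod L) else 0)"

definition minv :: "real mat \<Rightarrow> real mat" where
  "minv A = (SOME B. inverts_mat A B \<and> inverts_mat B A)"

(* F(a,b,c) with m = dM; blocks indexed 0..N-1 *)
definition Ffun :: "nat \<Rightarrow> nat \<Rightarrow> nat \<Rightarrow> real mat \<Rightarrow> real mat \<Rightarrow> real mat \<Rightarrow> real mat \<Rightarrow> real vec
    \<Rightarrow> (nat \<Rightarrow> real vec \<Rightarrow> real vec \<Rightarrow> real vec) \<Rightarrow> real vec \<Rightarrow> real vec" where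
  "Ffun m L N A B C D l S v =
     (let a = vec_block v 0 m; b = vec_block v m (L * N); c = vec_block v (m + L * N) (L * N) in
      (A *\<^sub>v a + B *\<^sub>v b + l) @\<^sub>v (transpose_mat B *\<^sub>v a + C *\<^sub>v b + D *\<^sub>v c) @\<^sub>v
      vec (L * N) (\<lambda>k. S (k div L) (vec_block b (L * (k div L)) L) (vec_block c (L * (k div L)) L) $ (k mod L)))"

end

theory Submission
  imports Defs
begin

lemma mv_index: assumes "A \<in> carrier_mat n k" "v \<in> carrier_vec k" "i < n"
  shows "(A *\<^sub>v v) $ i = (\<Sum>j<k. A $$ (i,j) * v $ j)"
  using assms by (auto simp: scalar_prod_def atLeast0LessThan intro!: sum.cong)

lemma det_imp_invertible: assumes A: "(A::real mat) \<in> carrier_mat n n" and d: "det A \<noteq> 0"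
  shows "invertible_mat A"
proof -
  from det_non_zero_imp_unit[OF A d, of undefined]
  obtain B where B: "B \<in> carrier_mat n n" "B * A = 1\<^sub>m n" "A * B = 1\<^sub>m n"
    unfolding Units_def ring_mat_def by auto
  show ?thesis unfolding invertible_mat_def inverts_mat_def square_mat.simps
    using A B by auto
qed

lemma inj_imp_invertible: assumes A: "(A::real mat) \<in> carrier_mat n n"
  and inj: "\<And>v. v \<in> carrier_vec n \<Longrightarrow> A *\<^sub>v v = 0\<^sub>v n \<Longrightarrow> v = 0\<^sub>v n"
  shows "invertible_mat A"
  using det_imp_invertible[OF A] det_0_iff_vec_prod_zero[OF A] inj by blast

lemma minv_props: assumes A: "(A::real mat) \<in> carrier_mat n n" and inv: "invertible_mat A"
  shows "minv A \<in> carrier_mat n n" "A * minv A = 1\<^sub>m n" "minv A * A = 1\<^sub>m n"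
proof -
  have ex: "\<exists>B. inverts_mat A B \<and> inverts_mat B A" using inv unfolding invertible_mat_def by auto
  hence h: "inverts_mat A (minv A) \<and> inverts_mat (minv A) A" unfolding minv_def by (rule someI_ex)
  hence 1: "A * minv A = 1\<^sub>m n" and 2: "minv A * A = 1\<^sub>m (dim_row (minv A))"
    using A unfolding inverts_mat_def by auto
  have c: "dim_col (minv A) = n" using arg_cong[OF 1, of dim_col] by simp
  have r: "dim_row (minv A) = n" using arg_cong[OF 2, of dim_col] A by simp
  show "minv A \<in> carrier_mat n n" using c r by auto
  show "A * minv A = 1\<^sub>m n" by fact
  show "minv A * A = 1\<^sub>m n" using 2 r by simp
qed

lemma spd_inj: assumes "sym_pos_def n A" "v \<in> carrier_vec n" "A *\<^sub>v v = 0\<^sub>v n"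
  shows "v = 0\<^sub>v n"
proof (rule ccontr)
  assume "v \<noteq> 0\<^sub>v n"
  with assms have "v \<bullet> (A *\<^sub>v v) > 0" unfolding sym_pos_def_def by auto
  with assms(3) assms(2) show False by simp
qed

lemma spd_invertible: assumes "sym_pos_def n A" shows "invertible_mat A"
  using inj_imp_invertible[of A n] spd_inj[OF assms] assms unfolding sym_pos_def_def by auto

lemma sym_scalar: assumes A: "(A::real mat) \<in> carrier_mat n n" "transpose_mat A = A"
  and x: "x \<in> carrier_vec n" and y: "y \<in> carrier_vec n"
  shows "(A *\<^sub>v x) \<bullet> y = x \<bullet> (A *\<^sub>v y)"
  using transpose_vec_mult_scalar[OF A(1) y x] A(2) by simp

lemma inv_pos: assumes S: "(S::real mat) \<in> carrier_mat n n"
  and P: "P \<in> carrier_mat n n" "P * S = 1\<^sub>m n" "S * P = 1\<^sub>m n"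
  and pos: "\<And>v. v \<in> carrier_vec n \<Longrightarrow> v \<noteq> 0\<^sub>v n \<Longrightarrow> v \<bullet> (S *\<^sub>v v) > 0"
  and v: "v \<in> carrier_vec n" "v \<noteq> 0\<^sub>v n"
  shows "v \<bullet> (P *\<^sub>v v) > 0"
proof -
  define y where "y = P *\<^sub>v v"
  have y: "y \<in> carrier_vec n" using P v y_def by auto
  have Sy: "S *\<^sub>v y = v" unfolding y_def using S P v
    by (metis assoc_mult_mat_vec one_mult_mat_vec)
  have "y \<noteq> 0\<^sub>v n" using Sy S v by auto
  hence "y \<bullet> (S *\<^sub>v y) > 0" using pos y by auto
  moreover have "v \<bullet> (P *\<^sub>v v) = y \<bullet> (S *\<^sub>v y)"
    unfolding y_def[symmetric] using Sy comm_scalar_prod[OF y, of v] v by simp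
  ultimately show ?thesis by simp
qed

lemma schur_pos: assumes A: "sym_pos_def m (A::real mat)" and B: "B \<in> carrier_mat m k"
  and C: "C \<in> carrier_mat k k"
  and E: "sym_pos_def (m + k) (four_block_mat A B (transpose_mat B) C)"
  and v: "v \<in> carrier_vec k" "v \<noteq> 0\<^sub>v k"
  shows "v \<bullet> ((C - transpose_mat B * minv A * B) *\<^sub>v v) > 0"
proof -
  have Ac: "A \<in> carrier_mat m m" using A unfolding sym_pos_def_def by auto
  note Ai = minv_props[OF Ac spd_invertible[OF A]]
  have Bt: "transpose_mat B \<in> carrier_mat k m" using B by auto
  define a where "a = - (minv A *\<^sub>v (B *\<^sub>v v))"
  have a: "a \<in> carrier_vec m" unfolding a_def using Ai B v by auto
  have Bv: "B *\<^sub>v v \<in> carrier_vec m" using B v by auto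
  have AAi: "A *\<^sub>v (minv A *\<^sub>v (B *\<^sub>v v)) = B *\<^sub>v v"
    using assoc_mult_mat_vec[OF Ac Ai(1) Bv, symmetric] Ai(2) Bv by simp
  have neg: "\<And>u. u \<in> carrier_vec m \<Longrightarrow> A *\<^sub>v (- u) = - (A *\<^sub>v u)"
    using Ac by (intro eq_vecI) auto
  have Aa: "A *\<^sub>v a = - (B *\<^sub>v v)" unfolding a_def
    using neg[of "minv A *\<^sub>v (B *\<^sub>v v)"] AAi Ai(1) Bv by simp
  define x where "x = a @\<^sub>v v"
  have x: "x \<in> carrier_vec (m + k)" unfolding x_def using a v by auto
  have xnz: "x \<noteq> 0\<^sub>v (m+k)"
  proof
    assume "x = 0\<^sub>v (m+k)"
    hence "\<forall>i<k. v $ i = 0" unfolding x_def using a v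
      by (metis add_less_cancel_left carrier_vecD index_append_vec(1) index_append_vec(2)
          index_zero_vec(1) index_zero_vec(2) not_add_less1 add_diff_cancel_left')
    hence "v = 0\<^sub>v k" using v by (intro eq_vecI) auto
    with v show False by simp
  qed
  have Ex: "four_block_mat A B (transpose_mat B) C *\<^sub>v x = (A *\<^sub>v a + B *\<^sub>v v) @\<^sub>v (transpose_mat B *\<^sub>v a + C *\<^sub>v v)"
    unfolding x_def by (rule four_block_mat_mult_vec[OF Ac B Bt C a v(1)])
  have z: "A *\<^sub>v a + B *\<^sub>v v = 0\<^sub>v m" unfolding Aa using Bv
    by (intro eq_vecI) auto
  have "x \<bullet> (four_block_mat A B (transpose_mat B) C *\<^sub>v x) = a \<bullet> 0\<^sub>v m + v \<bullet> (transpose_mat B *\<^sub>v a + C *\<^sub>v v)"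
    unfolding Ex z unfolding x_def
    by (rule scalar_prod_append[OF a v(1)], insert Bt C a v, auto)
  also have "\<dots> = v \<bullet> (transpose_mat B *\<^sub>v a) + v \<bullet> (C *\<^sub>v v)"
    using a v Bt C by (simp add: scalar_prod_add_distrib[of _ k])
  also have "v \<bullet> (transpose_mat B *\<^sub>v a) = - (v \<bullet> (transpose_mat B *\<^sub>v (minv A *\<^sub>v (B *\<^sub>v v))))"
  proof -
    have y: "minv A *\<^sub>v (B *\<^sub>v v) \<in> carrier_vec m" using Ai(1) Bv by auto
    have "transpose_mat B *\<^sub>v a = - (transpose_mat B *\<^sub>v (minv A *\<^sub>v (B *\<^sub>v v)))"
      unfolding a_def using Bt y B Ai(1) by (intro eq_vecI; auto; subst scalar_prod_uminus_right; auto)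
    thus ?thesis using Bt y v by simp
  qed
  finally have 1: "x \<bullet> (four_block_mat A B (transpose_mat B) C *\<^sub>v x)
     = v \<bullet> (C *\<^sub>v v) - v \<bullet> (transpose_mat B *\<^sub>v (minv A *\<^sub>v (B *\<^sub>v v)))" by simp
  have "(C - transpose_mat B * minv A * B) *\<^sub>v v = C *\<^sub>v v - transpose_mat B *\<^sub>v (minv A *\<^sub>v (B *\<^sub>v v))"
  proof -
    have TA: "transpose_mat B * minv A \<in> carrier_mat k m" using Bt Ai(1) by auto
    have "(transpose_mat B * minv A * B) *\<^sub>v v = transpose_mat B *\<^sub>v (minv A *\<^sub>v (B *\<^sub>v v))"
      by (subst assoc_mult_mat_vec[OF TA B v(1)], subst assoc_mult_mat_vec[OF Bt Ai(1) Bv], rule refl)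
    moreover have "(C - transpose_mat B * minv A * B) *\<^sub>v v = C *\<^sub>v v - (transpose_mat B * minv A * B) *\<^sub>v v"
      by (rule minus_mult_distrib_mat_vec[OF C _ v(1)], insert TA B, auto)
    ultimately show ?thesis by simp
  qed
  hence "v \<bullet> ((C - transpose_mat B * minv A * B) *\<^sub>v v) = v \<bullet> (C *\<^sub>v v) - v \<bullet> (transpose_mat B *\<^sub>v (minv A *\<^sub>v (B *\<^sub>v v)))"
    using C Bt Ai B v by (simp add: scalar_prod_minus_distrib[of _ k])
  with 1 E x xnz show ?thesis unfolding sym_pos_def_def by auto
qed

lemma sum_blocks: "(\<Sum>r<L*N. (f r :: real)) = (\<Sum>i<N. \<Sum>k<L. f (L*i+k::nat))"
proof (induct N)
  case 0 then show ?case by simp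
next
  case (Suc N)
  have "(\<Sum>r<L*Suc N. f r) = (\<Sum>r<L*N + L. f r)" by (simp add: add.commute)
  also have "\<dots> = (\<Sum>r<L*N. f r) + (\<Sum>k<L. f (L*N+k))"
  proof -
    have "(\<Sum>r<L*N + L. f r) = (\<Sum>r\<in>{0..<L*N}. f r) + (\<Sum>r\<in>{L*N..<L*N+L}. f r)"
      by (simp add: atLeast0LessThan[symmetric] sum.atLeastLessThan_concat)
    also have "(\<Sum>r\<in>{L*N..<L*N+L}. f r) = (\<Sum>r\<in>{0+L*N..<L+L*N}. f r)" by (simp add: add.commute)
    also have "\<dots> = (\<Sum>k\<in>{0..<L}. f (k+L*N))" by (rule sum.shift_bounds_nat_ivl)
    finally show ?thesis by (simp add: atLeast0LessThan add.commute)
  qed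
  finally show ?case using Suc by simp
qed

lemma bd_index: assumes L: "L > 0" and i: "i < N" and k: "k < L"
  and z: "z \<in> carrier_vec (L*N)"
  shows "(blockdiag L N Xs *\<^sub>v z) $ (L*i+k) = (\<Sum>k'<L. Xs i $$ (k,k') * z $ (L*i+k'))"
proof -
  have lt: "L*i+k < L*N"
  proof -
    have "L*i+k < L*i + L" using k by simp
    also have "\<dots> = L*(i+1)" by simp
    also have "\<dots> \<le> L*N" using i by (intro mult_le_mono2) simp
    finally show ?thesis .
  qed
  have lt2: "\<And>i' k'. i' < N \<Longrightarrow> k' < L \<Longrightarrow> L*i'+k' < L*N"
  proof -
    fix i' k' assume "i' < N" "k' < L"
    have "L*i'+k' < L*i' + L" using \<open>k'<L\<close> by simp
    also have "\<dots> = L*(i'+1)" by simp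
    also have "\<dots> \<le> L*N" using \<open>i'<N\<close> by (intro mult_le_mono2) simp
    finally show "L*i'+k' < L*N" .
  qed
  have bc: "blockdiag L N Xs \<in> carrier_mat (L*N) (L*N)" unfolding blockdiag_def by auto
  have "(blockdiag L N Xs *\<^sub>v z) $ (L*i+k) = (\<Sum>c<L*N. blockdiag L N Xs $$ (L*i+k, c) * z $ c)"
    by (rule mv_index[OF bc z lt])
  also have "\<dots> = (\<Sum>i'<N. \<Sum>k'<L. blockdiag L N Xs $$ (L*i+k, L*i'+k') * z $ (L*i'+k'))"
    by (rule sum_blocks)
  also have "\<dots> = (\<Sum>i'<N. if i = i' then (\<Sum>k'<L. Xs i $$ (k,k') * z $ (L*i+k')) else 0)"
  proof (rule sum.cong[OF refl])
    fix i' assume "i' \<in> {..<N}"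
    hence i': "i' < N" by simp
    have "\<And>k'. k' < L \<Longrightarrow> blockdiag L N Xs $$ (L*i+k, L*i'+k') =
       (if i = i' then Xs i $$ (k,k') else 0)"
      unfolding blockdiag_def using lt lt2[OF i'] L k by auto
    thus "(\<Sum>k'<L. blockdiag L N Xs $$ (L*i+k, L*i'+k') * z $ (L*i'+k')) =
      (if i = i' then (\<Sum>k'<L. Xs i $$ (k,k') * z $ (L*i+k')) else 0)"
      by (auto intro!: sum.cong)
  qed
  also have "\<dots> = (\<Sum>k'<L. Xs i $$ (k,k') * z $ (L*i+k'))" using i by simp
  finally show ?thesis .
qed

lemma bd_block: assumes L: "L > 0" and i: "i < N" and z: "z \<in> carrier_vec (L*N)"
  and X: "Xs i \<in> carrier_mat L L"
  shows "vec_block (blockdiag L N Xs *\<^sub>v z) (L*i) L = Xs i *\<^sub>v vec_block z (L*i) L"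
proof (rule eq_vecI)
  fix k assume "k < dim_vec (Xs i *\<^sub>v vec_block z (L*i) L)"
  hence k: "k < L" using X by simp
  have vb: "vec_block z (L*i) L \<in> carrier_vec L" unfolding vec_block_def by simp
  show "vec_block (blockdiag L N Xs *\<^sub>v z) (L*i) L $ k = (Xs i *\<^sub>v vec_block z (L*i) L) $ k"
    unfolding mv_index[OF X vb k] using bd_index[OF L i k z]
    by (simp add: vec_block_def k)
qed (insert X, simp add: vec_block_def)

lemma scalar_blocks: assumes z: "z \<in> carrier_vec (L*N)" and w: "w \<in> carrier_vec (L*N)"
  shows "z \<bullet> w = (\<Sum>i<N. vec_block z (L*i) L \<bullet> vec_block w (L*i) L)"
  using w unfolding scalar_prod_def vec_block_def
  by (simp add: atLeast0LessThan sum_blocks)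

lemma D_index: assumes L: "L > 0" and r: "r < L*N" and z: "z \<in> carrier_vec (L*N)"
  shows "(blockdiag L N (\<lambda>i. Dv i \<cdot>\<^sub>m 1\<^sub>m L) *\<^sub>v z) $ r = Dv (r div L) * z $ r"
proof -
  define i where "i = r div L"
  define k where "k = r mod L"
  have rr: "r = L*i+k" unfolding i_def k_def by simp
  have k: "k < L" unfolding k_def using L by simp
  have i: "i < N" unfolding i_def using r L
    by (simp add: less_mult_imp_div_less mult.commute)
  have "(blockdiag L N (\<lambda>i. Dv i \<cdot>\<^sub>m 1\<^sub>m L) *\<^sub>v z) $ r =
     (\<Sum>k'<L. (Dv i \<cdot>\<^sub>m 1\<^sub>m L) $$ (k,k') * z $ (L*i+k'))"
    unfolding rr by (rule bd_index[OF L i k z])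
  also have "\<dots> = (\<Sum>k'<L. if k = k' then Dv i * z $ (L*i+k') else 0)"
    by (rule sum.cong[OF refl], insert k, auto)
  also have "\<dots> = Dv i * z $ r" using k rr by simp
  finally show ?thesis unfolding i_def .
qed

lemma vsq_nonneg: "(v::real vec) \<bullet> v \<ge> 0"
  unfolding scalar_prod_def by (intro sum_nonneg) simp

lemma vsq_zero: assumes v: "(v::real vec) \<in> carrier_vec n" and z: "v \<bullet> v = 0"
  shows "v = 0\<^sub>v n"
proof (rule eq_vecI)
  have "\<forall>i\<in>{0..<dim_vec v}. v $ i * v $ i = 0"
    using z unfolding scalar_prod_def by (subst sum_nonneg_eq_0_iff[symmetric]) auto
  thus "\<And>i. i < dim_vec (0\<^sub>v n) \<Longrightarrow> v $ i = 0\<^sub>v n $ i" using v by auto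
qed (insert v, auto)

lemma orth: assumes X: "(X::real mat) \<in> carrier_mat n n" "transpose_mat X = X"
  and a: "a \<in> carrier_vec n" and b: "b \<in> carrier_vec n"
  and Xa: "X *\<^sub>v a = \<alpha> \<cdot>\<^sub>v a" and Xb: "X *\<^sub>v b = \<beta> \<cdot>\<^sub>v b" and ne: "\<alpha> \<noteq> \<beta>"
  shows "a \<bullet> b = 0"
proof -
  have "\<alpha> * (a \<bullet> b) = (X *\<^sub>v a) \<bullet> b" using Xa a b by simp
  also have "\<dots> = a \<bullet> (X *\<^sub>v b)" by (rule sym_scalar[OF X a b])
  also have "\<dots> = \<beta> * (a \<bullet> b)" using Xb a b by simp
  finally show ?thesis using ne by simp
qed

lemma ker_trivial: assumes ec: "eigencomplementary L X Y" and v: "v \<in> carrier_vec L"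
  and Xv: "X *\<^sub>v v = 0\<^sub>v L" and Yv: "Y *\<^sub>v v = 0\<^sub>v L"
  shows "v = 0\<^sub>v L"
proof -
  have X: "X \<in> carrier_mat L L" "transpose_mat X = X" and Y: "Y \<in> carrier_mat L L"
    using ec unfolding eigencomplementary_def neg_semidef_def pos_semidef_def by auto
  show ?thesis
  proof (cases "det X = 0 \<and> det Y = 0")
    case False
    then show ?thesis using det_0_iff_vec_prod_zero[OF X(1)] det_0_iff_vec_prod_zero[OF Y]
      Xv Yv v by blast
  next
    case True
    with ec have eq: "neg_eig_sum L X = eig_space L Y 0" unfolding eigencomplementary_def by auto
    have "v \<in> eig_space L Y 0" unfolding eig_space_def using v Yv by auto
    with eq have "v \<in> neg_eig_sum L X" by simp
    hence "\<exists>(k::nat) \<xi> w. (\<forall>j<k. \<xi> j < 0 \<and> w j \<in> eig_space L X (\<xi> j)) \<and> (\<forall>r<L. v $ r = (\<Sum>j<k. w j $ r))"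
      unfolding neg_eig_sum_def by simp
    then obtain k :: nat and \<xi> w where w: "\<forall>j<k. \<xi> j < 0 \<and> w j \<in> eig_space L X (\<xi> j)"
      and vs: "\<forall>r<L. v $ r = (\<Sum>j<k. w j $ r)" by blast
    have wo: "v \<bullet> w j = 0" if j: "j < k" for j
    proof -
      have wj: "w j \<in> carrier_vec L" "X *\<^sub>v w j = \<xi> j \<cdot>\<^sub>v w j" using w j unfolding eig_space_def by auto
      have "\<xi> j * (v \<bullet> w j) = v \<bullet> (X *\<^sub>v w j)" using wj v by simp
      also have "\<dots> = (X *\<^sub>v v) \<bullet> w j" by (rule sym_scalar[OF X v wj(1), symmetric])
      also have "\<dots> = 0" using Xv wj by simp
      finally show ?thesis using w j by force
    qed
    have "v \<bullet> v = (\<Sum>r<L. v $ r * (\<Sum>j<k. w j $ r))"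
      unfolding scalar_prod_def using v vs by (auto simp: atLeast0LessThan)
    also have "\<dots> = (\<Sum>j<k. \<Sum>r<L. v $ r * w j $ r)"
      by (simp add: sum_distrib_left sum.swap[of _ "{..<L}"])
    also have "\<dots> = (\<Sum>j<k. v \<bullet> w j)"
    proof (rule sum.cong[OF refl])
      fix j assume "j \<in> {..<k}"
      hence "w j \<in> carrier_vec L" using w unfolding eig_space_def by auto
      thus "(\<Sum>r<L. v $ r * w j $ r) = v \<bullet> w j" unfolding scalar_prod_def
        by (simp add: atLeast0LessThan)
    qed
    also have "\<dots> = 0" using wo by simp
    finally show ?thesis using vsq_zero v by blast
  qed
qed

lemma eig_comb: assumes A: "(A::real mat) \<in> carrier_mat n n" and J: "finite J"
  and vs: "\<And>j. j \<in> J \<Longrightarrow> vs j \<in> carrier_vec n \<and> A *\<^sub>v vs j = c \<cdot>\<^sub>v vs j"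
  shows "A *\<^sub>v vec n (\<lambda>r. \<Sum>j\<in>J. a j * vs j $ r) = c \<cdot>\<^sub>v vec n (\<lambda>r. \<Sum>j\<in>J. a j * vs j $ r)"
proof (rule eq_vecI)
  fix r assume "r < dim_vec (c \<cdot>\<^sub>v vec n (\<lambda>r. \<Sum>j\<in>J. a j * vs j $ r))"
  hence r: "r < n" by simp
  have "(A *\<^sub>v vec n (\<lambda>r. \<Sum>j\<in>J. a j * vs j $ r)) $ r =
     (\<Sum>k<n. A $$ (r,k) * (\<Sum>j\<in>J. a j * vs j $ k))"
    by (subst mv_index[OF A _ r], auto)
  also have "\<dots> = (\<Sum>j\<in>J. a j * (\<Sum>k<n. A $$ (r,k) * vs j $ k))"
    by (simp add: sum_distrib_left sum.swap[of _ "{..<n}"] ac_simps)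
  also have "\<dots> = (\<Sum>j\<in>J. a j * (c * vs j $ r))"
  proof (rule sum.cong[OF refl])
    fix j assume j: "j \<in> J"
    have "(\<Sum>k<n. A $$ (r,k) * vs j $ k) = (A *\<^sub>v vs j) $ r"
      by (rule mv_index[OF A _ r, symmetric], insert vs[OF j], auto)
    also have "\<dots> = c * vs j $ r" using vs[OF j] r by auto
    finally show "a j * (\<Sum>k<n. A $$ (r,k) * vs j $ k) = a j * (c * vs j $ r)" by simp
  qed
  also have "\<dots> = (c \<cdot>\<^sub>v vec n (\<lambda>r. \<Sum>j\<in>J. a j * vs j $ r)) $ r"
    using r by (simp add: sum_distrib_left ac_simps)
  finally show "(A *\<^sub>v vec n (\<lambda>r. \<Sum>j\<in>J. a j * vs j $ r)) $ r =
    (c \<cdot>\<^sub>v vec n (\<lambda>r. \<Sum>j\<in>J. a j * vs j $ r)) $ r" .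
qed (insert A, auto)

lemma core: assumes ec: "eigencomplementary L X Y"
  and z: "z \<in> carrier_vec L" and w: "w \<in> carrier_vec L"
  and eqn: "Y *\<^sub>v z = X *\<^sub>v w"
  shows "z \<bullet> w \<le> 0"
proof -
  have X: "X \<in> carrier_mat L L" "transpose_mat X = X" "\<And>v. v \<in> carrier_vec L \<Longrightarrow> v \<bullet> (X *\<^sub>v v) \<le> 0"
    and Y: "Y \<in> carrier_mat L L" "transpose_mat Y = Y" "\<And>v. v \<in> carrier_vec L \<Longrightarrow> v \<bullet> (Y *\<^sub>v v) \<ge> 0"
    using ec unfolding eigencomplementary_def neg_semidef_def pos_semidef_def by auto
  from ec obtain vs where vsp: "\<forall>j<L. vs j \<in> carrier_vec L \<and> (\<exists>\<kappa>. X *\<^sub>v vs j = \<kappa> \<cdot>\<^sub>v vs j) \<and>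
                   (\<exists>\<mu>. Y *\<^sub>v vs j = \<mu> \<cdot>\<^sub>v vs j)"
    and inv: "invertible_mat (mat_of_cols L (map vs [0..<L]))"
    unfolding eigencomplementary_def by blast
  define \<kappa> where "\<kappa> j = (SOME \<kappa>. X *\<^sub>v vs j = \<kappa> \<cdot>\<^sub>v vs j)" for j
  define \<mu> where "\<mu> j = (SOME \<mu>. Y *\<^sub>v vs j = \<mu> \<cdot>\<^sub>v vs j)" for j
  have \<kappa>: "X *\<^sub>v vs j = \<kappa> j \<cdot>\<^sub>v vs j" if "j < L" for j
  proof -
    have "\<exists>k. X *\<^sub>v vs j = k \<cdot>\<^sub>v vs j" using vsp that by blast
    from someI_ex[OF this] show ?thesis unfolding \<kappa>_def .
  qed
  have \<mu>: "Y *\<^sub>v vs j = \<mu> j \<cdot>\<^sub>v vs j" if "j < L" for j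
  proof -
    have "\<exists>k. Y *\<^sub>v vs j = k \<cdot>\<^sub>v vs j" using vsp that by blast
    from someI_ex[OF this] show ?thesis unfolding \<mu>_def .
  qed
  define V where "V = mat_of_cols L (map vs [0..<L])"
  have Vc: "V \<in> carrier_mat L L" unfolding V_def using mat_of_cols_carrier(1)[of L "map vs [0..<L]"] by simp
  note Vi = minv_props[OF Vc inv[folded V_def]]
  define u where "u = minv V *\<^sub>v z"
  have u: "u \<in> carrier_vec L" unfolding u_def using Vi z by auto
  have Vu: "V *\<^sub>v u = z" unfolding u_def
    using assoc_mult_mat_vec[OF Vc Vi(1) z, symmetric] Vi(2) z by simp
  have zexp: "z $ r = (\<Sum>j<L. u $ j * vs j $ r)" if r: "r < L" for r
  proof -
    have "z $ r = (\<Sum>j<L. V $$ (r,j) * u $ j)" unfolding Vu[symmetric] by (rule mv_index[OF Vc u r])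
    also have "\<dots> = (\<Sum>j<L. u $ j * vs j $ r)"
      by (rule sum.cong[OF refl], unfold V_def, subst mat_of_cols_index, insert r, auto)
    finally show ?thesis .
  qed
  define cls where "cls j = (\<kappa> j, \<mu> j)" for j
  define Ps where "Ps = cls ` {..<L}"
  define zp where "zp p = vec L (\<lambda>r. \<Sum>j\<in>{j. j \<in> {..<L} \<and> cls j = p}. u $ j * vs j $ r)" for p
  have zpc: "zp p \<in> carrier_vec L" for p unfolding zp_def by simp
  have Xzp: "X *\<^sub>v zp p = fst p \<cdot>\<^sub>v zp p" for p
    unfolding zp_def by (rule eig_comb[OF X(1)], insert vsp \<kappa>, auto simp: cls_def)
  have Yzp: "Y *\<^sub>v zp p = snd p \<cdot>\<^sub>v zp p" for p
    unfolding zp_def by (rule eig_comb[OF Y(1)], insert vsp \<mu>, auto simp: cls_def)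
  have orthp: "zp p \<bullet> zp q = 0" if "p \<noteq> q" for p q
  proof (cases "fst p = fst q")
    case False
    then show ?thesis by (rule orth[OF X(1,2) zpc zpc Xzp Xzp])
  next
    case True
    with that have "snd p \<noteq> snd q" by (cases p, cases q, auto)
    then show ?thesis by (rule orth[OF Y(1,2) zpc zpc Yzp Yzp])
  qed
  have zsum: "z $ r = (\<Sum>p\<in>Ps. zp p $ r)" if r: "r < L" for r
  proof -
    have "z $ r = (\<Sum>j\<in>{..<L}. u $ j * vs j $ r)" by (rule zexp[OF r])
    also have "\<dots> = (\<Sum>p\<in>Ps. \<Sum>j\<in>{j. j \<in> {..<L} \<and> cls j = p}. u $ j * vs j $ r)"
      by (rule sum.group[symmetric], auto simp: Ps_def)
    also have "\<dots> = (\<Sum>p\<in>Ps. zp p $ r)" unfolding zp_def using r by simp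
    finally show ?thesis .
  qed
  have fin: "finite Ps" unfolding Ps_def by simp
  have dot: "z \<bullet> y = (\<Sum>p\<in>Ps. zp p \<bullet> y)" if y: "y \<in> carrier_vec L" for y
  proof -
    have "z \<bullet> y = (\<Sum>r<L. (\<Sum>p\<in>Ps. zp p $ r) * y $ r)"
      unfolding scalar_prod_def using y zsum by (auto simp: atLeast0LessThan)
    also have "\<dots> = (\<Sum>p\<in>Ps. \<Sum>r<L. zp p $ r * y $ r)"
      by (simp add: sum_distrib_right sum.swap[of _ "{..<L}"])
    also have "\<dots> = (\<Sum>p\<in>Ps. zp p \<bullet> y)"
      unfolding scalar_prod_def using y by (auto simp: atLeast0LessThan)
    finally show ?thesis .
  qed
  have each: "w \<bullet> zp p \<le> 0" if p: "p \<in> Ps" for p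
  proof -
    have zz: "z \<bullet> zp p = zp p \<bullet> zp p"
    proof -
      have "z \<bullet> zp p = (\<Sum>q\<in>Ps. zp q \<bullet> zp p)" by (rule dot[OF zpc])
      also have "\<dots> = (\<Sum>q\<in>Ps. if q = p then zp p \<bullet> zp p else 0)"
        by (rule sum.cong[OF refl], insert orthp, auto)
      also have "\<dots> = zp p \<bullet> zp p" using p fin by simp
      finally show ?thesis .
    qed
    have "snd p * (zp p \<bullet> zp p) = z \<bullet> (Y *\<^sub>v zp p)" unfolding Yzp zz[symmetric] using z zpc by simp
    also have "\<dots> = (Y *\<^sub>v z) \<bullet> zp p" by (rule sym_scalar[OF Y(1,2) z zpc, symmetric])
    also have "\<dots> = (X *\<^sub>v w) \<bullet> zp p" by (simp add: eqn)
    also have "\<dots> = w \<bullet> (X *\<^sub>v zp p)" by (rule sym_scalar[OF X(1,2) w zpc])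
    also have "\<dots> = fst p * (w \<bullet> zp p)" unfolding Xzp using w zpc by simp
    finally have key: "snd p * (zp p \<bullet> zp p) = fst p * (w \<bullet> zp p)" .
    have sX: "fst p * (zp p \<bullet> zp p) \<le> 0" using X(3)[OF zpc, of p] unfolding Xzp using zpc by simp
    have sY: "snd p * (zp p \<bullet> zp p) \<ge> 0" using Y(3)[OF zpc, of p] unfolding Yzp using zpc by simp
    show ?thesis
    proof (cases "zp p \<bullet> zp p = 0")
      case True
      hence "zp p = 0\<^sub>v L" by (rule vsq_zero[OF zpc])
      thus ?thesis using w by simp
    next
      case False
      hence pos: "zp p \<bullet> zp p > 0" using vsq_nonneg[of "zp p"] by simp
      hence f: "fst p \<le> 0" and s: "snd p \<ge> 0" using sX sY
        by (auto simp: mult_le_0_iff zero_le_mult_iff)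
      show ?thesis
      proof (cases "fst p = 0")
        case True
        with key pos have "snd p = 0" by simp
        moreover have "0 \<cdot>\<^sub>v zp p = 0\<^sub>v L" using zpc[of p] by (intro eq_vecI) auto
        ultimately have "zp p = 0\<^sub>v L" using ker_trivial[OF ec zpc[of p]] Xzp[of p] Yzp[of p] True zpc[of p] by simp
        with False show ?thesis by simp
      next
        case f0: False
        with f have "fst p < 0" by simp
        moreover have "fst p * (w \<bullet> zp p) \<ge> 0" using key sY by simp
        ultimately show ?thesis by (simp add: mult_le_0_iff zero_le_mult_iff)
      qed
    qed
  qed
  have "z \<bullet> w = (\<Sum>p\<in>Ps. zp p \<bullet> w)" by (rule dot[OF w])
  also have "\<dots> = (\<Sum>p\<in>Ps. w \<bullet> zp p)" using comm_scalar_prod[OF zpc w] by simp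
  also have "\<dots> \<le> 0" using each by (intro sum_nonpos) auto
  finally show ?thesis .
qed

theorem lemma3p1:
  fixes d L M N :: nat
    and A B C D :: "real mat" and l :: "real vec" and Dv :: "nat \<Rightarrow> real"
    and S :: "nat \<Rightarrow> real vec \<Rightarrow> real vec \<Rightarrow> real vec"
    and xstar :: "real vec" and H :: "real mat" and Xs Ys :: "nat \<Rightarrow> real mat"
  assumes "d \<in> {2, 3}" and "L > 0" and "M > 0" and "N > 0"
    and "sym_pos_def (d * M) A" and "sym_pos_def (L * N) C"
    and "B \<in> carrier_mat (d * M) (L * N)"
    and "sym_pos_def (d * M + L * N) (four_block_mat A B (transpose_mat B) C)"
    and "\<forall>i<N. Dv i > 0"
    and "D = blockdiag L N (\<lambda>i. Dv i \<cdot>\<^sub>m 1\<^sub>m L)"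
    and "l \<in> carrier_vec (d * M)"
    and "\<forall>i<N. semismooth (2 * L) L (\<lambda>v. S i (vec_first v L) (vec_last v L))"
    and "xstar \<in> carrier_vec (d * M + 2 * (L * N))"
    and "Ffun (d * M) L N A B C D l S xstar = 0\<^sub>v (d * M + 2 * (L * N))"
    and "H \<in> clarke (d * M + 2 * (L * N)) (d * M + 2 * (L * N)) (Ffun (d * M) L N A B C D l S) xstar"
    and "\<forall>i<N. Xs i \<in> carrier_mat L L \<and> Ys i \<in> carrier_mat L L"
    and "H = four_block_mat (four_block_mat A B (transpose_mat B) C)
                            (0\<^sub>m (d * M) (L * N) @\<^sub>r D)
                            (four_block_mat (0\<^sub>m (L * N) (d * M)) (blockdiag L N Xs) (0\<^sub>m 0 (d * M)) (0\<^sub>m 0 (L * N)))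
                            (blockdiag L N Ys)"
    and "\<forall>i<N. eigencomplementary L (Xs i) (Ys i)"
  shows "invertible_mat (blockdiag L N Ys - blockdiag L N Xs *
           minv (C - transpose_mat B * minv A * B) * D)"
proof -
  note L = assms(2)
  define n where "n = L * N"
  define m where "m = d * M"
  have Aspd: "sym_pos_def m A" using assms(5) unfolding m_def .
  have Ac: "A \<in> carrier_mat m m" using Aspd unfolding sym_pos_def_def by auto
  have Cc: "C \<in> carrier_mat n n" using assms(6) unfolding sym_pos_def_def n_def by auto
  have Bc: "B \<in> carrier_mat m n" using assms(7) unfolding m_def n_def .
  note Ai = minv_props[OF Ac spd_invertible[OF Aspd]]
  define SE where "SE = C - transpose_mat B * minv A * B"
  have SEc: "SE \<in> carrier_mat n n" unfolding SE_def using Cc Bc Ai(1) by auto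
  have SEpos: "v \<bullet> (SE *\<^sub>v v) > 0" if "v \<in> carrier_vec n" "v \<noteq> 0\<^sub>v n" for v
    unfolding SE_def by (rule schur_pos[OF Aspd Bc Cc _ that], insert assms(8), simp add: m_def n_def)
  have SEinv: "invertible_mat SE"
  proof (rule inj_imp_invertible[OF SEc])
    fix v assume v: "v \<in> carrier_vec n" "SE *\<^sub>v v = 0\<^sub>v n"
    show "v = 0\<^sub>v n"
    proof (rule ccontr)
      assume "v \<noteq> 0\<^sub>v n"
      from SEpos[OF v(1) this] v show False by simp
    qed
  qed
  note Pp = minv_props[OF SEc SEinv]
  define P where "P = minv SE"
  have Pc: "P \<in> carrier_mat n n" and PS: "P * SE = 1\<^sub>m n" and SP: "SE * P = 1\<^sub>m n"
    using Pp unfolding P_def by auto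
  have bdc: "blockdiag L N F \<in> carrier_mat n n" for F unfolding blockdiag_def n_def by simp
  define Xb where "Xb = blockdiag L N Xs"
  define Yb where "Yb = blockdiag L N Ys"
  have Xbc: "Xb \<in> carrier_mat n n" and Ybc: "Yb \<in> carrier_mat n n" and Dc: "D \<in> carrier_mat n n"
    unfolding Xb_def Yb_def assms(10) by (auto intro: bdc)
  define T where "T = Yb - Xb * P * D"
  have Tc: "T \<in> carrier_mat n n" unfolding T_def using Xbc Ybc Pc Dc by auto
  have "invertible_mat T"
  proof (rule inj_imp_invertible[OF Tc])
    fix z assume z: "z \<in> carrier_vec n" and Tz: "T *\<^sub>v z = 0\<^sub>v n"
    define Dz where "Dz = D *\<^sub>v z"
    define w where "w = P *\<^sub>v Dz"
    have Dzc: "Dz \<in> carrier_vec n" unfolding Dz_def using Dc z by auto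
    have wc: "w \<in> carrier_vec n" unfolding w_def using Pc Dzc by auto
    have XPD: "Xb * P * D \<in> carrier_mat n n" using Xbc Pc Dc by auto
    have "(Xb * P * D) *\<^sub>v z = Xb *\<^sub>v w"
      unfolding w_def Dz_def using Xbc Pc Dc z
      by (simp add: assoc_mult_mat_vec[of _ n n _ n])
    moreover have "T *\<^sub>v z = Yb *\<^sub>v z - (Xb * P * D) *\<^sub>v z"
      unfolding T_def by (rule minus_mult_distrib_mat_vec[OF Ybc XPD z])
    ultimately have diff0: "Yb *\<^sub>v z - Xb *\<^sub>v w = 0\<^sub>v n" using Tz by simp
    have YX: "Yb *\<^sub>v z = Xb *\<^sub>v w"
    proof (rule eq_vecI)
      fix r assume "r < dim_vec (Xb *\<^sub>v w)"
      hence r: "r < n" using Xbc by simp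
      have "(Yb *\<^sub>v z - Xb *\<^sub>v w) $ r = 0" using diff0 r by simp
      thus "(Yb *\<^sub>v z) $ r = (Xb *\<^sub>v w) $ r" using r Xbc Ybc by simp
    qed (insert Xbc Ybc, simp)
    have blk: "vec_block z (L*i) L \<bullet> vec_block w (L*i) L \<le> 0" if i: "i < N" for i
    proof -
      have XY: "Xs i \<in> carrier_mat L L" "Ys i \<in> carrier_mat L L" using assms(16) i by auto
      have "Ys i *\<^sub>v vec_block z (L*i) L = vec_block (Yb *\<^sub>v z) (L*i) L"
        unfolding Yb_def by (rule bd_block[of L i N z Ys, OF L i _ XY(2), symmetric], insert z n_def, simp)
      also have "\<dots> = vec_block (Xb *\<^sub>v w) (L*i) L" by (simp add: YX)
      also have "\<dots> = Xs i *\<^sub>v vec_block w (L*i) L"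
        unfolding Xb_def by (rule bd_block[of L i N w Xs, OF L i _ XY(1)], insert wc n_def, simp)
      finally show ?thesis using assms(18) i
        by (intro core[of L "Xs i" "Ys i"]) (auto simp: vec_block_def)
    qed
    have Dblk: "vec_block Dz (L*i) L = Dv i \<cdot>\<^sub>v vec_block z (L*i) L" if i: "i < N" for i
    proof (rule eq_vecI)
      fix k assume "k < dim_vec (Dv i \<cdot>\<^sub>v vec_block z (L * i) L)"
      hence k: "k < L" by (simp add: vec_block_def)
      have lt: "L*i+k < L*N"
      proof -
        have "L*i+k < L*i + L" using k by simp
        also have "\<dots> = L*(i+1)" by simp
        also have "\<dots> \<le> L*N" using i by (intro mult_le_mono2) simp
        finally show ?thesis .
      qed
      have "Dz $ (L*i+k) = Dv ((L*i+k) div L) * z $ (L*i+k)"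
        unfolding Dz_def assms(10) by (rule D_index[OF L lt], insert z n_def, simp)
      also have "(L*i+k) div L = i" using k L by simp
      finally show "vec_block Dz (L*i) L $ k = (Dv i \<cdot>\<^sub>v vec_block z (L * i) L) $ k"
        using k by (simp add: vec_block_def)
    qed (simp add: vec_block_def)
    have "Dz \<bullet> w = (\<Sum>i<N. vec_block Dz (L*i) L \<bullet> vec_block w (L*i) L)"
      by (rule scalar_blocks, insert Dzc wc n_def, auto)
    also have "\<dots> = (\<Sum>i<N. Dv i * (vec_block z (L*i) L \<bullet> vec_block w (L*i) L))"
      by (rule sum.cong[OF refl], subst Dblk, simp, subst smult_scalar_prod_distrib, auto simp: vec_block_def)
    also have "\<dots> \<le> 0"
    proof (rule sum_nonpos)
      fix i assume "i \<in> {..<N}"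
      hence i: "i < N" by simp
      have "Dv i > 0" using assms(9) i by auto
      with blk[OF i] show "Dv i * (vec_block z (L*i) L \<bullet> vec_block w (L*i) L) \<le> 0"
        by (simp add: mult_nonneg_nonpos)
    qed
    finally have Dwle: "Dz \<bullet> w \<le> 0" .
    have Dz0: "Dz = 0\<^sub>v n"
    proof (rule ccontr)
      assume "Dz \<noteq> 0\<^sub>v n"
      from inv_pos[OF SEc Pc PS SP SEpos Dzc this] Dwle show False unfolding w_def by simp
    qed
    show "z = 0\<^sub>v n"
    proof (rule eq_vecI)
      fix r assume "r < dim_vec (0\<^sub>v n)"
      hence r: "r < L*N" unfolding n_def by simp
      have "r div L < N" using r L by (simp add: less_mult_imp_div_less mult.commute)
      hence pos: "Dv (r div L) > 0" using assms(9) by auto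
      have "Dz $ r = Dv (r div L) * z $ r"
        unfolding Dz_def assms(10) by (rule D_index[OF L r], insert z n_def, simp)
      hence "Dv (r div L) * z $ r = 0" using Dz0 r n_def by simp
      with pos show "z $ r = 0\<^sub>v n $ r" using r n_def by simp
    qed (insert z, simp)
  qed
  thus ?thesis unfolding T_def Xb_def Yb_def P_def SE_def .
qed

end
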